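(* Let $G=(V,E,w)$ be a weighted graph, $\alpha\geq 1$, $\beta\geq 0$, and consider an iteration of the $(\alpha,\beta)$-completion algorithm in which the current subgraph is $H\subseteq G$, the chosen pair is $(x,y)$ (so $\mathrm{dist}_H(x,y)>\alpha\,\mathrm{dist}_G(x,y)+\beta W_{\max}(G)$), $P_{x,y}=(x=x_0,x_1,\ldots,x_t=y)$ is the chosen shortest $x$–$y$ path in $G$, and $\mathcal{S}=([i_0,i_1],[i_1,i_2],\ldots,[i_{s-1},i_s])$ is the chosen minimal $\alpha$-segmentation of $P_{x,y}$ with respect to $H$. Let $H'=H\cup E_\alpha(\mathcal{S},H)$. Then for any $0\leq \ell<r\leq s$, \[ \mathrm{dist}_{H'}(x_{i_\ell},x_{i_r})\leq \alpha\cdot \mathrm{dist}_G(x_{i_\ell},x_{i_r}). \]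
   Context: $G$ is an undirected graph with positive edge weights $w$, in which every edge is a shortest path between its endpoints. $\mathrm{dist}_X$ is the weighted shortest-path distance in a graph $X$, and $W_{\max}(G)$ is the maximum edge weight of $G$. For a shortest path $P_{x,y}=(x_0,\ldots,x_t)$ in $G$ and a subgraph $H\subseteq G$, an $\alpha$-segmentation of $P_{x,y}$ (w.r.t. $H$) is a sequence of index intervals $([i_0,i_1],\ldots,[i_{s-1},i_s])$ with $0=i_0<i_1<\cdots<i_s=t$ such that every segment with $i_j-i_{j-1}\geq 2$ satisfies $\mathrm{dist}_H(x_{i_{j-1}},x_{i_j})\leq \alpha\,\mathrm{dist}_G(x_{i_{j-1}},x_{i_j})$. It is minimal if no consecutive sequence of its segments can be merged into one segment so as to produce another $\alpha$-segmentation of the same path. $E(\mathcal{S})$ is the set of edges $\{x_{i_{j-1}},x_{i_j}\}$ corresponding to segments with $i_j-i_{j-1}=1$, and $E_\alpha(\mathcal{S},H)=\{e=\{u,v\}\in E(\mathcal{S}) : \mathrm{dist}_H(u,v)>\alpha\, w(e)\}$. The $(\alpha,\beta)$-completion algorithm starts from an initial subgraph $H\gets H_0\subseteq G$ and, while there exist $x,y$ with $\mathrm{dist}_H(x,y)>\alpha\,\mathrm{dist}_G(x,y)+\beta W_{\max}(G)$, picks such a pair, takes a shortest $x$–$y$ path $P_{x,y}$ in $G$, finds a minimal $\alpha$-segmentation $\mathcal{S}$ of $P_{x,y}$ w.r.t. the current $H$, and updates $H\gets H\cup E_\alpha(\mathcal{S},H)$. *)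

theory Defs
  imports "HOL-Library.Extended_Real"
begin

text \<open>Weighted undirected graphs: a finite vertex set V, an edge set E of
  two-element subsets of V, and a weight function w on edges.
  Subgraphs are edge subsets on the same vertex set.\<close>

definition weighted_graph :: "'a set \<Rightarrow> 'a set set \<Rightarrow> ('a set \<Rightarrow> real) \<Rightarrow> bool" where
  "weighted_graph V E w \<longleftrightarrow> finite V \<and>
     (\<forall>e\<in>E. \<exists>u v. e = {u, v} \<and> u \<in> V \<and> v \<in> V \<and> u \<noteq> v) \<and>
     (\<forall>e\<in>E. w e > 0)"

definition is_walk :: "'a set set \<Rightarrow> 'a list \<Rightarrow> bool" where
  "is_walk E xs \<longleftrightarrow> xs \<noteq> [] \<and> (\<forall>i. Suc i < length xs \<longrightarrow> {xs ! i, xs ! Suc i} \<in> E)"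

definition walk_weight :: "('a set \<Rightarrow> real) \<Rightarrow> 'a list \<Rightarrow> real" where
  "walk_weight w xs = (\<Sum>i<length xs - 1. w {xs ! i, xs ! Suc i})"

text \<open>Weighted shortest-path distance (infinite if no walk exists).\<close>
definition dist_in :: "'a set set \<Rightarrow> ('a set \<Rightarrow> real) \<Rightarrow> 'a \<Rightarrow> 'a \<Rightarrow> ereal" where
  "dist_in E w x y = Inf {ereal (walk_weight w xs) | xs.
      is_walk E xs \<and> hd xs = x \<and> last xs = y}"

definition edges_shortest :: "'a set set \<Rightarrow> ('a set \<Rightarrow> real) \<Rightarrow> bool" where
  "edges_shortest E w \<longleftrightarrow> (\<forall>u v. {u, v} \<in> E \<longrightarrow> dist_in E w u v = ereal (w {u, v}))"

definition W_max :: "'a set set \<Rightarrow> ('a set \<Rightarrow> real) \<Rightarrow> real" where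
  "W_max E w = Max (w ` E)"

definition shortest_path :: "'a set set \<Rightarrow> ('a set \<Rightarrow> real) \<Rightarrow> 'a \<Rightarrow> 'a \<Rightarrow> 'a list \<Rightarrow> bool" where
  "shortest_path E w x y P \<longleftrightarrow> is_walk E P \<and> hd P = x \<and> last P = y \<and>
     ereal (walk_weight w P) = dist_in E w x y"

text \<open>An alpha-segmentation of path P (in G = (E,w)) w.r.t. H, given as the
  list of indices [i_0, ..., i_s].\<close>
definition is_segmentation ::
  "'a set set \<Rightarrow> ('a set \<Rightarrow> real) \<Rightarrow> 'a set set \<Rightarrow> real \<Rightarrow> 'a list \<Rightarrow> nat list \<Rightarrow> bool" where
  "is_segmentation E w H \<alpha> P I \<longleftrightarrow>
     I \<noteq> [] \<and> I ! 0 = 0 \<and> last I = length P - 1 \<and> sorted_wrt (<) I \<and>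
     (\<forall>j. 0 < j \<and> j < length I \<longrightarrow> I ! j - I ! (j - 1) \<ge> 2 \<longrightarrow>
        dist_in H w (P ! (I ! (j - 1))) (P ! (I ! j))
          \<le> ereal \<alpha> * dist_in E w (P ! (I ! (j - 1))) (P ! (I ! j)))"

text \<open>Minimality: merging any block of consecutive segments (segments a+1..b,
  with b - a >= 2, i.e. at least two segments) into one never yields another
  alpha-segmentation.\<close>
definition is_minimal_segmentation ::
  "'a set set \<Rightarrow> ('a set \<Rightarrow> real) \<Rightarrow> 'a set set \<Rightarrow> real \<Rightarrow> 'a list \<Rightarrow> nat list \<Rightarrow> bool" where
  "is_minimal_segmentation E w H \<alpha> P I \<longleftrightarrow> is_segmentation E w H \<alpha> P I \<and>
     (\<forall>a b. a + 2 \<le> b \<and> b < length I \<longrightarrow>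
        \<not> is_segmentation E w H \<alpha> P (take (Suc a) I @ drop b I))"

definition seg_edges :: "'a list \<Rightarrow> nat list \<Rightarrow> 'a set set" where
  "seg_edges P I = {{P ! (I ! (j - 1)), P ! (I ! j)} | j.
      0 < j \<and> j < length I \<and> I ! j - I ! (j - 1) = 1}"

definition seg_edges_alpha ::
  "('a set \<Rightarrow> real) \<Rightarrow> 'a set set \<Rightarrow> real \<Rightarrow> 'a list \<Rightarrow> nat list \<Rightarrow> 'a set set" where
  "seg_edges_alpha w H \<alpha> P I = {e \<in> seg_edges P I. \<forall>u v. e = {u, v} \<longrightarrow>
      dist_in H w u v > ereal (\<alpha> * w e)}"

end

theory Submission
  imports Defs
begin

lemma walk_Cons2: "is_walk F (a#b#xs) \<longleftrightarrow> {a,b} \<in> F \<and> is_walk F (b#xs)"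
proof
  assume h: "is_walk F (a#b#xs)"
  have "{a,b} \<in> F" using h unfolding is_walk_def by (auto dest: spec[of _ 0])
  moreover have "is_walk F (b#xs)" unfolding is_walk_def
  proof (intro conjI allI impI)
    fix i assume i: "Suc i < length (b # xs)"
    have "Suc (Suc i) < length (a#b#xs)" using i by simp
    then have "{(a#b#xs) ! Suc i, (a#b#xs) ! Suc (Suc i)} \<in> F" using h unfolding is_walk_def by blast
    then show "{(b # xs) ! i, (b # xs) ! Suc i} \<in> F" by simp
  qed simp
  ultimately show "{a,b} \<in> F \<and> is_walk F (b#xs)" by simp
next
  assume h: "{a,b} \<in> F \<and> is_walk F (b#xs)"
  show "is_walk F (a#b#xs)" unfolding is_walk_def
  proof (intro conjI allI impI)
    fix i assume i: "Suc i < length (a # b # xs)"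
    show "{(a # b # xs) ! i, (a # b # xs) ! Suc i} \<in> F"
    proof (cases i)
      case 0 then show ?thesis using h by simp
    next
      case (Suc j) then show ?thesis using h i unfolding is_walk_def by auto
    qed
  qed simp
qed

lemma walk_single[simp]: "is_walk F [a]" "walk_weight w [a] = 0"
  unfolding is_walk_def walk_weight_def by auto

lemma walk_weight_Cons2: "walk_weight w (a#b#xs) = w {a,b} + walk_weight w (b#xs)"
  unfolding walk_weight_def by (simp del: sum.lessThan_Suc add: sum.lessThan_Suc_shift)

lemma walk_append:
  "is_walk F xs \<Longrightarrow> is_walk F ys \<Longrightarrow> last xs = hd ys \<Longrightarrow>
   is_walk F (xs @ tl ys) \<and> walk_weight w (xs @ tl ys) = walk_weight w xs + walk_weight w ys"
proof (induction xs rule: induct_list012)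
  case 1 then show ?case by (simp add: is_walk_def)
next
  case (2 x)
  then have "ys \<noteq> []" by (simp add: is_walk_def)
  then have "[x] @ tl ys = ys" using 2 by (cases ys) auto
  then show ?case using 2 by simp
next
  case (3 x y zs)
  then have "is_walk F (y # zs @ tl ys) \<and> walk_weight w (y # zs @ tl ys) = walk_weight w (y#zs) + walk_weight w ys"
    by (simp add: walk_Cons2)
  then show ?case using 3 by (simp add: walk_Cons2 walk_weight_Cons2)
qed

lemma walk_append_hd_last:
  "xs \<noteq> [] \<Longrightarrow> ys \<noteq> [] \<Longrightarrow> last xs = hd ys \<Longrightarrow> hd (xs @ tl ys) = hd xs \<and> last (xs @ tl ys) = last ys"
  by (cases ys) auto

lemma walk_rev: "is_walk F xs \<Longrightarrow> is_walk F (rev xs) \<and> walk_weight w (rev xs) = walk_weight w xs"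
proof (induction xs rule: induct_list012)
  case 1 then show ?case by (simp add: is_walk_def)
next
  case (2 x) then show ?case by simp
next
  case (3 x y zs)
  have w: "is_walk F [y, x]" using 3(3) by (simp add: walk_Cons2 insert_commute)
  have iy: "is_walk F (rev (y#zs)) \<and> walk_weight w (rev (y#zs)) = walk_weight w (y#zs)"
    using 3 by (simp add: walk_Cons2)
  have "rev (x#y#zs) = rev (y#zs) @ tl [y,x]" by simp
  moreover have "last (rev (y#zs)) = hd [y,x]" by simp
  ultimately show ?case using walk_append[OF conjunct1[OF iy] w, of w] iy
    by (simp add: walk_weight_Cons2 insert_commute)
qed

lemma dist_sym: "dist_in F w a b = dist_in F w b a"
proof -
  have "\<And>a b. dist_in F w a b \<le> dist_in F w b a"
  proof -
    fix a b
    show "dist_in F w a b \<le> dist_in F w b a"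
      unfolding dist_in_def
    proof (rule Inf_mono)
      fix z assume "z \<in> {ereal (walk_weight w xs) |xs. is_walk F xs \<and> hd xs = b \<and> last xs = a}"
      then obtain xs where xs: "z = ereal (walk_weight w xs)" "is_walk F xs" "hd xs = b" "last xs = a" by auto
      have ne: "xs \<noteq> []" using xs by (simp add: is_walk_def)
      show "\<exists>y\<in>{ereal (walk_weight w xs) |xs. is_walk F xs \<and> hd xs = a \<and> last xs = b}. y \<le> z"
        using walk_rev[OF xs(2), of w] xs ne by (intro bexI[of _ z]) (auto simp: hd_rev last_rev intro!: exI[of _ "rev xs"])
    qed
  qed
  then show ?thesis by (meson antisym)
qed

lemma dist_le_walk: "is_walk F xs \<Longrightarrow> dist_in F w (hd xs) (last xs) \<le> ereal (walk_weight w xs)"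
  unfolding dist_in_def by (rule Inf_lower) auto

lemma walk_weight_nonneg: "\<forall>e\<in>F. w e > 0 \<Longrightarrow> is_walk F xs \<Longrightarrow> walk_weight w xs \<ge> 0"
  unfolding walk_weight_def is_walk_def
proof (intro sum_nonneg)
  fix i assume "\<forall>e\<in>F. 0 < w e" "xs \<noteq> [] \<and> (\<forall>i. Suc i < length xs \<longrightarrow> {xs ! i, xs ! Suc i} \<in> F)" "i \<in> {..<length xs - 1}"
  then show "0 \<le> w {xs ! i, xs ! Suc i}" by (auto intro: less_imp_le)
qed

lemma dist_nonneg: "\<forall>e\<in>F. w e > 0 \<Longrightarrow> dist_in F w a b \<ge> 0"
  unfolding dist_in_def by (rule Inf_greatest) (auto dest: walk_weight_nonneg)

lemma dist_mono: "F \<subseteq> F' \<Longrightarrow> dist_in F' w a b \<le> dist_in F w a b"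
  unfolding dist_in_def
  by (rule Inf_superset_mono) (auto simp: is_walk_def)

lemma ereal_Inf_add_bound:
  fixes D :: ereal
  assumes "\<And>p q. p\<in>A \<Longrightarrow> q\<in>B \<Longrightarrow> D \<le> p + q" "0 \<le> Inf A" "0 \<le> Inf B"
  shows "D \<le> Inf A + Inf B"
proof (cases "Inf A = \<infinity> \<or> Inf B = \<infinity>")
  case True then show ?thesis using assms(2,3) by auto
next
  case False
  have "Inf A \<noteq> -\<infinity>" "Inf B \<noteq> -\<infinity>" using assms(2,3) by auto
  then obtain a b where ab: "Inf A = ereal a" "Inf B = ereal b"
    using False by (cases "Inf A"; cases "Inf B") auto
  show ?thesis
  proof (rule ereal_le_epsilon2)
    fix e :: real assume e: "0 < e"
    have "Inf A < ereal (a + e/2)" using ab e by simp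
    then obtain p where p: "p \<in> A" "p < ereal (a + e/2)" by (auto simp: Inf_less_iff)
    have "Inf B < ereal (b + e/2)" using ab e by simp
    then obtain q where q: "q \<in> B" "q < ereal (b + e/2)" by (auto simp: Inf_less_iff)
    have "D \<le> p + q" using assms(1) p q by simp
    also have "\<dots> \<le> ereal (a + e/2) + ereal (b + e/2)" using p q by (intro add_mono) auto
    also have "\<dots> = Inf A + Inf B + ereal e" using ab by simp
    finally show "D \<le> Inf A + Inf B + ereal e" .
  qed
qed

lemma dist_triangle:
  assumes pos: "\<forall>e\<in>F. w e > 0"
  shows "dist_in F w a c \<le> dist_in F w a b + dist_in F w b c"
  unfolding dist_in_def
proof (rule ereal_Inf_add_bound)
  fix p q
  assume "p \<in> {ereal (walk_weight w xs) |xs. is_walk F xs \<and> hd xs = a \<and> last xs = b}"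
    "q \<in> {ereal (walk_weight w xs) |xs. is_walk F xs \<and> hd xs = b \<and> last xs = c}"
  then obtain xs ys where xs: "p = ereal (walk_weight w xs)" "is_walk F xs" "hd xs = a" "last xs = b"
    and ys: "q = ereal (walk_weight w ys)" "is_walk F ys" "hd ys = b" "last ys = c" by auto
  have ne: "xs \<noteq> []" "ys \<noteq> []" using xs ys by (auto simp: is_walk_def)
  have j: "is_walk F (xs @ tl ys) \<and> walk_weight w (xs @ tl ys) = walk_weight w xs + walk_weight w ys"
    using walk_append[OF xs(2) ys(2)] xs ys by simp
  have hl: "hd (xs @ tl ys) = a" "last (xs @ tl ys) = c" using walk_append_hd_last[OF ne] xs ys by auto
  have "Inf {ereal (walk_weight w xs) |xs. is_walk F xs \<and> hd xs = a \<and> last xs = c} \<le> ereal (walk_weight w (xs @ tl ys))"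
  proof (rule Inf_lower)
    show "ereal (walk_weight w (xs @ tl ys)) \<in> {ereal (walk_weight w xs) |xs. is_walk F xs \<and> hd xs = a \<and> last xs = c}"
      unfolding mem_Collect_eq by (rule exI[of _ "xs @ tl ys"]) (use j hl in simp)
  qed
  then show "Inf {ereal (walk_weight w xs) |xs. is_walk F xs \<and> hd xs = a \<and> last xs = c} \<le> p + q"
    using j xs ys by simp
next
  show "0 \<le> Inf {ereal (walk_weight w xs) |xs. is_walk F xs \<and> hd xs = a \<and> last xs = b}"
    using dist_nonneg[OF pos] unfolding dist_in_def by blast
  show "0 \<le> Inf {ereal (walk_weight w xs) |xs. is_walk F xs \<and> hd xs = b \<and> last xs = c}"
    using dist_nonneg[OF pos] unfolding dist_in_def by blast
qed

definition segS :: "('a set \<Rightarrow> real) \<Rightarrow> 'a list \<Rightarrow> nat \<Rightarrow> nat \<Rightarrow> real" where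
  "segS w P i k = (\<Sum>m=i..<k. w {P ! m, P ! Suc m})"

lemma sum_shift_aux: "(\<Sum>n<(d::nat). f (i+n)) = (\<Sum>m=i..<i+d. (f m :: real))"
  by (induction d) auto

lemma segS_concat: "i \<le> j \<Longrightarrow> j \<le> k \<Longrightarrow> segS w P i k = segS w P i j + segS w P j k"
  unfolding segS_def by (simp add: sum.atLeastLessThan_concat)

lemma seg_walk:
  assumes "is_walk F P" "i \<le> k" "k < length P"
  defines "s \<equiv> drop i (take (Suc k) P)"
  shows "is_walk F s \<and> hd s = P ! i \<and> last s = P ! k \<and> walk_weight w s = segS w P i k"
proof -
  have len: "length s = Suc k - i" using assms by (simp add: s_def)
  have nth: "\<And>n. n < Suc k - i \<Longrightarrow> s ! n = P ! (i + n)" using assms by (simp add: s_def)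
  have ne: "s \<noteq> []" using len assms by auto
  have walk: "is_walk F s" unfolding is_walk_def
  proof (intro conjI allI impI)
    show "s \<noteq> []" by fact
    fix n assume n: "Suc n < length s"
    then have "Suc (i + n) < length P" using len assms by simp
    then have "{P ! (i+n), P ! Suc (i+n)} \<in> F" using assms(1) unfolding is_walk_def by blast
    then show "{s ! n, s ! Suc n} \<in> F" using nth n len by simp
  qed
  have hd: "hd s = P ! i" using ne nth[of 0] assms by (simp add: hd_conv_nth)
  have last: "last s = P ! k" using ne nth len assms by (simp add: last_conv_nth)
  have "walk_weight w s = (\<Sum>n<k-i. w {P ! (i+n), P ! Suc (i+n)})"
    unfolding walk_weight_def using len nth by (intro sum.cong) auto
  also have "\<dots> = segS w P i k" unfolding segS_def using sum_shift_aux[where f="\<lambda>m. w {P ! m, P ! Suc m}" and d="k-i" and i=i] assms by simp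
  finally show ?thesis using walk hd last by simp
qed

lemma dist_le_segS:
  assumes "is_walk F P" "i \<le> k" "k < length P"
  shows "dist_in F w (P ! i) (P ! k) \<le> ereal (segS w P i k)"
  using seg_walk[OF assms, of w] dist_le_walk[of F "drop i (take (Suc k) P)" w] by simp

lemma shortest_sub:
  assumes sp: "shortest_path E w x y P" and "i \<le> k" "k < length P"
  shows "ereal (segS w P i k) \<le> dist_in E w (P ! i) (P ! k)"
  unfolding dist_in_def
proof (rule Inf_greatest)
  fix z assume "z \<in> {ereal (walk_weight w xs) |xs. is_walk E xs \<and> hd xs = P ! i \<and> last xs = P ! k}"
  then obtain Q where Q: "z = ereal (walk_weight w Q)" "is_walk E Q" "hd Q = P ! i" "last Q = P ! k" by auto
  have wP: "is_walk E P" and hP: "hd P = x" and lP: "last P = y" and dP: "ereal (walk_weight w P) = dist_in E w x y"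
    using sp unfolding shortest_path_def by auto
  have Pne: "P \<noteq> []" using wP by (simp add: is_walk_def)
  define t where "t = length P - 1"
  have t: "k \<le> t" "t < length P" using assms Pne by (auto simp: t_def)
  define A where "A = drop 0 (take (Suc i) P)"
  define C where "C = drop k (take (Suc t) P)"
  have A: "is_walk E A \<and> hd A = P ! 0 \<and> last A = P ! i \<and> walk_weight w A = segS w P 0 i"
    unfolding A_def using seg_walk[OF wP, of 0 i w] assms by simp
  have C: "is_walk E C \<and> hd C = P ! k \<and> last C = P ! t \<and> walk_weight w C = segS w P k t"
    unfolding C_def using seg_walk[OF wP, of k t w] t by simp
  have neA: "A \<noteq> []" "C \<noteq> []" "Q \<noteq> []" using A C Q by (auto simp: is_walk_def)
  have R1: "is_walk E (A @ tl Q) \<and> walk_weight w (A @ tl Q) = walk_weight w A + walk_weight w Q"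
    using walk_append[of E A Q w] A Q by simp
  have R1hl: "hd (A @ tl Q) = P ! 0 \<and> last (A @ tl Q) = P ! k"
    using walk_append_hd_last[of A Q] neA A Q by simp
  have R1ne: "A @ tl Q \<noteq> []" using neA by simp
  have R: "is_walk E ((A @ tl Q) @ tl C) \<and> walk_weight w ((A @ tl Q) @ tl C) = walk_weight w (A @ tl Q) + walk_weight w C"
    using walk_append[of E "A @ tl Q" C w] R1 R1hl C by simp
  have Rhl: "hd ((A @ tl Q) @ tl C) = x \<and> last ((A @ tl Q) @ tl C) = y"
    using walk_append_hd_last[of "A @ tl Q" C] R1ne neA R1hl C hP lP Pne t
    by (simp add: hd_conv_nth last_conv_nth t_def)
  have "dist_in E w x y \<le> ereal (walk_weight w ((A @ tl Q) @ tl C))"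
    using dist_le_walk[of E "(A @ tl Q) @ tl C" w] R Rhl by simp
  then have "ereal (walk_weight w P) \<le> ereal (walk_weight w ((A @ tl Q) @ tl C))" by (subst dP)
  then have le: "walk_weight w P \<le> walk_weight w ((A @ tl Q) @ tl C)" by simp
  have "walk_weight w P = segS w P 0 t" unfolding walk_weight_def segS_def t_def
    by (simp add: atLeast0LessThan)
  also have "\<dots> = segS w P 0 i + segS w P i k + segS w P k t"
    using segS_concat[of 0 i t w P] segS_concat[of i k t w P] assms t by simp
  finally have "segS w P i k \<le> walk_weight w Q" using le R R1 A C by simp
  then show "ereal (segS w P i k) \<le> z" using Q by simp
qed

theorem lemma3p1:
  fixes V :: "'a set" and E H :: "'a set set" and w :: "'a set \<Rightarrow> real"
    and \<alpha> \<beta> :: real and x y :: 'a and P :: "'a list" and I :: "nat list"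
  assumes "weighted_graph V E w"
    and "edges_shortest E w"
    and "\<alpha> \<ge> 1" and "\<beta> \<ge> 0"
    and "H \<subseteq> E"
    and "x \<in> V" and "y \<in> V"
    and "dist_in H w x y > ereal \<alpha> * dist_in E w x y + ereal (\<beta> * W_max E w)"
    and "shortest_path E w x y P"
    and "is_minimal_segmentation E w H \<alpha> P I"
    and "l < r" and "r < length I"
  shows "dist_in (H \<union> seg_edges_alpha w H \<alpha> P I) w (P ! (I ! l)) (P ! (I ! r))
           \<le> ereal \<alpha> * dist_in E w (P ! (I ! l)) (P ! (I ! r))"
proof -
  define H' where "H' = H \<union> seg_edges_alpha w H \<alpha> P I"
  have posE: "\<forall>e\<in>E. w e > 0" using assms(1) unfolding weighted_graph_def by blast
  have wP: "is_walk E P" using assms(9) unfolding shortest_path_def by blast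
  have Pne: "P \<noteq> []" using wP by (simp add: is_walk_def)
  have seg: "is_segmentation E w H \<alpha> P I" using assms(10) unfolding is_minimal_segmentation_def by blast
  have Ine: "I \<noteq> []" and lastI: "last I = length P - 1" and sortI: "sorted_wrt (<) I"
    and segc: "\<And>j. 0 < j \<Longrightarrow> j < length I \<Longrightarrow> I ! j - I ! (j - 1) \<ge> 2 \<Longrightarrow>
        dist_in H w (P ! (I ! (j - 1))) (P ! (I ! j)) \<le> ereal \<alpha> * dist_in E w (P ! (I ! (j - 1))) (P ! (I ! j))"
    using seg unfolding is_segmentation_def by auto
  have Imono: "\<And>a b. a < b \<Longrightarrow> b < length I \<Longrightarrow> I ! a < I ! b"
    using sortI by (simp add: sorted_wrt_nth_less)
  have Imono': "\<And>a b. a \<le> b \<Longrightarrow> b < length I \<Longrightarrow> I ! a \<le> I ! b"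
    using Imono by (metis le_eq_less_or_eq less_imp_le)
  have Ilt: "\<And>j. j < length I \<Longrightarrow> I ! j < length P"
  proof -
    fix j assume j: "j < length I"
    have "I ! j \<le> I ! (length I - 1)" using Imono'[of j "length I - 1"] j by simp
    also have "\<dots> = length P - 1" using lastI Ine by (simp add: last_conv_nth)
    finally show "I ! j < length P" using Pne by (cases P) auto
  qed
  have segE: "seg_edges P I \<subseteq> E"
  proof
    fix e assume "e \<in> seg_edges P I"
    then obtain j where j: "e = {P ! (I ! (j - 1)), P ! (I ! j)}" "0 < j" "j < length I" "I ! j - I ! (j - 1) = 1"
      unfolding seg_edges_def by blast
    have "I ! j = Suc (I ! (j - 1))" using j(4) by simp
    moreover have "Suc (I ! (j-1)) < length P" using Ilt[OF j(3)] calculation by simp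
    ultimately show "e \<in> E" using wP j(1) unfolding is_walk_def by metis
  qed
  have H'E: "H' \<subseteq> E" using assms(5) segE unfolding H'_def seg_edges_alpha_def by blast
  have posH': "\<forall>e\<in>H'. w e > 0" using H'E posE by blast
  have a0: "0 \<le> ereal \<alpha>" using assms(3) by simp
  have segbound: "dist_in H' w (P ! (I ! (j - 1))) (P ! (I ! j)) \<le> ereal (\<alpha> * segS w P (I ! (j-1)) (I ! j))"
    if j: "0 < j" "j < length I" for j
  proof -
    define p where "p = I ! (j-1)"
    define q where "q = I ! j"
    have pq: "p < q" "q < length P" using Imono[of "j-1" j] j Ilt[of j] by (auto simp: p_def q_def)
    have dG: "dist_in E w (P ! p) (P ! q) \<le> ereal (segS w P p q)"
      using dist_le_segS[OF wP, of p q w] pq by simp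
    show ?thesis
    proof (cases "q - p \<ge> 2")
      case True
      have "dist_in H' w (P ! p) (P ! q) \<le> dist_in H w (P ! p) (P ! q)"
        by (rule dist_mono) (simp add: H'_def)
      also have "\<dots> \<le> ereal \<alpha> * dist_in E w (P ! p) (P ! q)" using segc[OF j] True by (simp add: p_def q_def)
      also have "\<dots> \<le> ereal \<alpha> * ereal (segS w P p q)" by (rule ereal_mult_left_mono[OF dG a0])
      finally show ?thesis by (simp add: p_def q_def)
    next
      case False
      then have qp: "q = Suc p" using pq by simp
      define e where "e = {P ! p, P ! q}"
      have sS: "segS w P p q = w e" unfolding segS_def e_def qp by simp
      have eE: "e \<in> E" using wP pq qp unfolding is_walk_def e_def by blast
      have we: "w e > 0" using posE eE by blast
      have eseg: "e \<in> seg_edges P I" unfolding seg_edges_def e_def p_def q_def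
        using j qp by (auto simp: p_def q_def)
      show ?thesis
      proof (cases "e \<in> seg_edges_alpha w H \<alpha> P I")
        case True
        then have "e \<in> H'" by (simp add: H'_def)
        then have "is_walk H' [P ! p, P ! q]" by (simp add: walk_Cons2 e_def)
        then have "dist_in H' w (P ! p) (P ! q) \<le> ereal (walk_weight w [P ! p, P ! q])"
          using dist_le_walk[of H' "[P ! p, P ! q]" w] by simp
        also have "\<dots> = ereal (w e)" by (simp add: walk_weight_Cons2 e_def)
        also have "\<dots> \<le> ereal (\<alpha> * w e)" using we assms(3) by simp
        finally show ?thesis using sS by (simp add: p_def q_def)
      next
        case False
        then obtain u v where uv: "e = {u, v}" "\<not> dist_in H w u v > ereal (\<alpha> * w e)"
          using eseg unfolding seg_edges_alpha_def by blast
        have "dist_in H w (P ! p) (P ! q) \<le> ereal (\<alpha> * w e)"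
        proof -
          have "(u = P ! p \<and> v = P ! q) \<or> (u = P ! q \<and> v = P ! p)" using uv(1) unfolding e_def
            by (metis doubleton_eq_iff)
          then show ?thesis using uv(2) dist_sym[of H w u v] by (auto simp: not_less)
        qed
        moreover have "dist_in H' w (P ! p) (P ! q) \<le> dist_in H w (P ! p) (P ! q)"
          by (rule dist_mono) (simp add: H'_def)
        ultimately show ?thesis using sS by (simp add: p_def q_def)
      qed
    qed
  qed
  have main: "dist_in H' w (P ! (I ! l)) (P ! (I ! k)) \<le> ereal (\<alpha> * segS w P (I ! l) (I ! k))"
    if "l \<le> k" "k \<le> r" for k
    using that
  proof (induction k rule: dec_induct)
    case base
    have "dist_in H' w (P ! (I ! l)) (P ! (I ! l)) \<le> ereal (walk_weight w [P ! (I ! l)])"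
      using dist_le_walk[of H' "[P ! (I ! l)]" w] by simp
    then show ?case by (simp add: segS_def)
  next
    case (step n)
    have n: "Suc n < length I" using step assms(12) by simp
    have "dist_in H' w (P ! (I ! l)) (P ! (I ! Suc n))
        \<le> dist_in H' w (P ! (I ! l)) (P ! (I ! n)) + dist_in H' w (P ! (I ! n)) (P ! (I ! Suc n))"
      by (rule dist_triangle[OF posH'])
    also have "\<dots> \<le> ereal (\<alpha> * segS w P (I ! l) (I ! n)) + ereal (\<alpha> * segS w P (I ! n) (I ! Suc n))"
      using step segbound[of "Suc n"] n by (intro add_mono) auto
    also have "\<dots> = ereal (\<alpha> * segS w P (I ! l) (I ! Suc n))"
      using segS_concat[of "I ! l" "I ! n" "I ! Suc n" w P] Imono'[of l n] Imono'[of n "Suc n"] step n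
      by (simp add: algebra_simps)
    finally show ?case .
  qed
  have "dist_in H' w (P ! (I ! l)) (P ! (I ! r)) \<le> ereal \<alpha> * ereal (segS w P (I ! l) (I ! r))"
    using main[of r] assms(11) by simp
  also have "\<dots> \<le> ereal \<alpha> * dist_in E w (P ! (I ! l)) (P ! (I ! r))"
    using shortest_sub[OF assms(9), of "I ! l" "I ! r"] Imono'[of l r] Ilt[OF assms(12)] assms(11,12)
    by (intro ereal_mult_left_mono[OF _ a0]) auto
  finally show ?thesis unfolding H'_def .
qed

end
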